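(* Every Camina group is a generalized B-group.
   Context: For a finite group $G$ with identity $e$ and $X\subseteq G$, write $\underline{X}=\sum_{x\in X}x\in\mathbb{Z}G$. A subring $\mathcal{A}$ of $\mathbb{Z}G$ is an S-ring over $G$ if there is a partition $\mathcal{S}(\mathcal{A})$ of $G$ (basic sets) such that $\{e\}\in\mathcal{S}(\mathcal{A})$, $X\in\mathcal{S}(\mathcal{A})\Rightarrow X^{-1}\in\mathcal{S}(\mathcal{A})$, and $\mathcal{A}$ is the $\mathbb{Z}$-span of $\{\underline{X}: X\in\mathcal{S}(\mathcal{A})\}$. An $\mathcal{A}$-subgroup is a subgroup of $G$ that is a union of basic sets; $\mathcal{A}$ is primitive if its only $\mathcal{A}$-subgroups are $\{e\}$ and $G$. $\mathcal{A}$ is central if $\mathcal{A}\subseteq\mathcal{Z}(\mathbb{Z}G)$ (the center of $\mathbb{Z}G$, which is itself an S-ring whose basic sets are the conjugacy classes). The trivial S-ring is $\mathbb{Z}e+\mathbb{Z}\underline{G}$. A central S-ring over $G$ is proper if it is different from both $\mathcal{Z}(\mathbb{Z}G)$ and the trivial S-ring. A finite group $G$ is a generalized B-group if no proper central S-ring over $G$ is primitive. A finite group $G$ is a Camina group if it has a normal subgroup $H$ with $\{e\}\neq H\neq G$ such that every coset $xH$ with $x\notin H$ is contained in a single conjugacy class of $G$. *)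

theory Defs
  imports "HOL-Algebra.Algebra"
begin

text \<open>Integral group ring ZG of a finite group G, represented as integer-valued
functions on the carrier (zero outside the carrier). An element f corresponds to
the formal sum of f x times x over x in G.\<close>

definition zg :: "('a, 'b) monoid_scheme \<Rightarrow> ('a \<Rightarrow> int) set" where
  "zg G = {f. \<forall>x. x \<notin> carrier G \<longrightarrow> f x = 0}"

definition zg_mult :: "('a, 'b) monoid_scheme \<Rightarrow> ('a \<Rightarrow> int) \<Rightarrow> ('a \<Rightarrow> int) \<Rightarrow> ('a \<Rightarrow> int)" where
  "zg_mult G f g = (\<lambda>z. if z \<in> carrier G
       then (\<Sum>x\<in>carrier G. f x * g (inv\<^bsub>G\<^esub> x \<otimes>\<^bsub>G\<^esub> z)) else 0)"

definition usum :: "'a set \<Rightarrow> ('a \<Rightarrow> int)" where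
  "usum B = (\<lambda>x. if x \<in> B then 1 else 0)"

definition zspan :: "'a set set \<Rightarrow> ('a \<Rightarrow> int) set" where
  "zspan P = {f. \<exists>c. f = (\<lambda>z. \<Sum>B\<in>P. c B * usum B z)}"

definition zg_center :: "('a, 'b) monoid_scheme \<Rightarrow> ('a \<Rightarrow> int) set" where
  "zg_center G = {f \<in> zg G. \<forall>g \<in> zg G. zg_mult G f g = zg_mult G g f}"

text \<open>P is the partition of basic sets of an S-ring over G, namely of the S-ring
zspan P: P partitions G, contains {e}, is closed under inversion of sets, and
zspan P is a subring of ZG (closure under addition, negation and containing
1 = underline {e} are automatic, so only closure under multiplication is required).\<close>
definition S_ring_basis :: "('a, 'b) monoid_scheme \<Rightarrow> 'a set set \<Rightarrow> bool" where
  "S_ring_basis G P \<longleftrightarrow>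
     (\<forall>B\<in>P. B \<noteq> {}) \<and> \<Union>P = carrier G \<and>
     (\<forall>B\<in>P. \<forall>C\<in>P. B \<noteq> C \<longrightarrow> B \<inter> C = {}) \<and>
     {\<one>\<^bsub>G\<^esub>} \<in> P \<and>
     (\<forall>B\<in>P. (\<lambda>x. inv\<^bsub>G\<^esub> x) ` B \<in> P) \<and>
     (\<forall>f\<in>zspan P. \<forall>g\<in>zspan P. zg_mult G f g \<in> zspan P)"

definition S_subgroup :: "('a, 'b) monoid_scheme \<Rightarrow> 'a set set \<Rightarrow> 'a set \<Rightarrow> bool" where
  "S_subgroup G P H \<longleftrightarrow> subgroup H G \<and> (\<exists>Q\<subseteq>P. H = \<Union>Q)"

definition S_primitive :: "('a, 'b) monoid_scheme \<Rightarrow> 'a set set \<Rightarrow> bool" where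
  "S_primitive G P \<longleftrightarrow> (\<forall>H. S_subgroup G P H \<longrightarrow> H = {\<one>\<^bsub>G\<^esub>} \<or> H = carrier G)"

definition S_central :: "('a, 'b) monoid_scheme \<Rightarrow> 'a set set \<Rightarrow> bool" where
  "S_central G P \<longleftrightarrow> zspan P \<subseteq> zg_center G"

definition trivial_S_ring :: "('a, 'b) monoid_scheme \<Rightarrow> ('a \<Rightarrow> int) set" where
  "trivial_S_ring G = {f. \<exists>a b. f = (\<lambda>z. a * usum {\<one>\<^bsub>G\<^esub>} z + b * usum (carrier G) z)}"

definition S_proper_central :: "('a, 'b) monoid_scheme \<Rightarrow> 'a set set \<Rightarrow> bool" where
  "S_proper_central G P \<longleftrightarrow> S_central G P \<and>
     zspan P \<noteq> zg_center G \<and> zspan P \<noteq> trivial_S_ring G"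

definition generalized_B_group :: "('a, 'b) monoid_scheme \<Rightarrow> bool" where
  "generalized_B_group G \<longleftrightarrow>
     (\<forall>P. S_ring_basis G P \<and> S_proper_central G P \<longrightarrow> \<not> S_primitive G P)"

definition conj_class :: "('a, 'b) monoid_scheme \<Rightarrow> 'a \<Rightarrow> 'a set" where
  "conj_class G y = {inv\<^bsub>G\<^esub> g \<otimes>\<^bsub>G\<^esub> y \<otimes>\<^bsub>G\<^esub> g | g. g \<in> carrier G}"

definition Camina_group :: "('a, 'b) monoid_scheme \<Rightarrow> bool" where
  "Camina_group G \<longleftrightarrow> (\<exists>H. H \<lhd> G \<and> H \<noteq> {\<one>\<^bsub>G\<^esub>} \<and> H \<noteq> carrier G \<and>
     (\<forall>x \<in> carrier G - H. \<exists>y \<in> carrier G. x <#\<^bsub>G\<^esub> H \<subseteq> conj_class G y))"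

end

theory Submission
  imports Defs
begin



locale ctx = group G for G (structure) +
  fixes P :: "'a set set"
  assumes fin: "finite (carrier G)"
    and SB: "S_ring_basis G P"
begin

lemmas SBu = SB[unfolded S_ring_basis_def]
lemma P_ne: "B \<in> P \<Longrightarrow> B \<noteq> {}"
proof -
  have "\<forall>B\<in>P. B \<noteq> {}" using SBu by (elim conjE) assumption
  thus "B \<in> P \<Longrightarrow> B \<noteq> {}" by (rule bspec)
qed
lemma P_union: "\<Union>P = carrier G" using SBu by (elim conjE) assumption
lemma P_disj: "B \<in> P \<Longrightarrow> C \<in> P \<Longrightarrow> B \<noteq> C \<Longrightarrow> B \<inter> C = {}"
proof -
  have "\<forall>B\<in>P. \<forall>C\<in>P. B \<noteq> C \<longrightarrow> B \<inter> C = {}" using SBu by (elim conjE) assumption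
  thus "B \<in> P \<Longrightarrow> C \<in> P \<Longrightarrow> B \<noteq> C \<Longrightarrow> B \<inter> C = {}" by simp
qed
lemma P_one: "{\<one>} \<in> P" using SBu by (elim conjE) assumption
lemma P_inv: "B \<in> P \<Longrightarrow> (\<lambda>x. inv x) ` B \<in> P"
proof -
  have "\<forall>B\<in>P. (\<lambda>x. inv x) ` B \<in> P" using SBu by (elim conjE) assumption
  thus "B \<in> P \<Longrightarrow> (\<lambda>x. inv x) ` B \<in> P" by (rule bspec)
qed
lemma P_mult: "f \<in> zspan P \<Longrightarrow> g \<in> zspan P \<Longrightarrow> zg_mult G f g \<in> zspan P"
proof -
  have "\<forall>f\<in>zspan P. \<forall>g\<in>zspan P. zg_mult G f g \<in> zspan P" using SBu by (elim conjE) assumption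
  thus "f \<in> zspan P \<Longrightarrow> g \<in> zspan P \<Longrightarrow> zg_mult G f g \<in> zspan P" by simp
qed
lemma P_sub: "B \<in> P \<Longrightarrow> B \<subseteq> carrier G" using P_union by blast
lemma P_fin: "finite P"
proof -
  have "P \<subseteq> Pow (carrier G)" using P_sub by blast
  thus ?thesis using fin by (simp add: finite_subset)
qed
lemma P_cover: "z \<in> carrier G \<Longrightarrow> \<exists>B\<in>P. z \<in> B" using P_union by blast
lemma P_same: "B \<in> P \<Longrightarrow> C \<in> P \<Longrightarrow> z \<in> B \<Longrightarrow> z \<in> C \<Longrightarrow> B = C"
  using P_disj[of B C] by blast

lemma eval_span:
  assumes "B0 \<in> P" "z \<in> B0"
  shows "(\<Sum>B\<in>P. c B * usum B z) = c B0"
proof -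
  have "(\<Sum>B\<in>P. c B * usum B z) = c B0 * usum B0 z + (\<Sum>B\<in>P - {B0}. c B * usum B z)"
    using P_fin assms(1) by (simp add: sum.remove)
  also have "(\<Sum>B\<in>P - {B0}. c B * usum B z) = 0"
    by (rule sum.neutral) (use assms P_disj in \<open>auto simp: usum_def\<close>)
  finally show ?thesis using assms by (simp add: usum_def)
qed

lemma span_const:
  assumes "f \<in> zspan P" "B \<in> P" "x \<in> B" "y \<in> B"
  shows "f x = f y"
proof -
  obtain c where fc: "f = (\<lambda>z. \<Sum>B\<in>P. c B * usum B z)" using assms(1) unfolding zspan_def by blast
  have "f x = c B" unfolding fc using eval_span[OF assms(2,3)] by simp
  moreover have "f y = c B" unfolding fc using eval_span[OF assms(2,4)] by simp
  ultimately show ?thesis by simp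
qed

lemma usum_span: "B \<in> P \<Longrightarrow> usum B \<in> zspan P"
proof -
  assume B: "B \<in> P"
  define c :: "'a set \<Rightarrow> int" where "c = (\<lambda>B'. if B' = B then 1 else 0)"
  have "usum B = (\<lambda>z. \<Sum>B'\<in>P. c B' * usum B' z)"
  proof
    fix z
    show "usum B z = (\<Sum>B'\<in>P. c B' * usum B' z)"
    proof (cases "z \<in> B")
      case True
      thus ?thesis using eval_span[OF B True, of c] by (simp add: c_def usum_def)
    next
      case False
      have "(\<Sum>B'\<in>P. c B' * usum B' z) = 0"
        by (rule sum.neutral) (use False in \<open>simp add: c_def usum_def\<close>)
      thus ?thesis using False by (simp add: usum_def)
    qed
  qed
  thus ?thesis unfolding zspan_def by blast
qed

definition fib :: "'a set \<Rightarrow> 'a set \<Rightarrow> 'a \<Rightarrow> 'a set" where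
  "fib A C z = {x \<in> carrier G. x \<in> A \<and> inv x \<otimes> z \<in> C}"

lemma mult_usum:
  assumes "z \<in> carrier G"
  shows "zg_mult G (usum A) (usum C) z = int (card (fib A C z))"
proof -
  have "zg_mult G (usum A) (usum C) z = (\<Sum>x\<in>carrier G. usum A x * usum C (inv x \<otimes> z))"
    using assms unfolding zg_mult_def by (simp only: if_True)
  also have "\<dots> = (\<Sum>x\<in>carrier G. if x \<in> A \<and> inv x \<otimes> z \<in> C then 1 else 0)"
    by (rule sum.cong) (simp_all add: usum_def)
  also have "\<dots> = (\<Sum>x\<in>{x\<in>carrier G. x \<in> A \<and> inv x \<otimes> z \<in> C}. 1)"
    using fin by (simp only: sum.inter_filter)
  also have "\<dots> = int (card (fib A C z))" unfolding fib_def by simp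
  finally show ?thesis .
qed

lemma fib_const:
  assumes "A \<in> P" "C \<in> P" "B \<in> P" "x \<in> B" "y \<in> B"
  shows "card (fib A C x) = card (fib A C y)"
proof -
  have "zg_mult G (usum A) (usum C) x = zg_mult G (usum A) (usum C) y"
    using span_const[OF P_mult[OF usum_span usum_span] assms(3-5)] assms(1,2) by blast
  moreover have "x \<in> carrier G" "y \<in> carrier G" using P_sub assms by blast+
  ultimately show ?thesis using mult_usum by simp
qed

end



locale ctx2 = ctx +
  fixes H
  assumes cen: "S_central G P"
    and Hn: "H \<lhd> G"
    and cam: "\<forall>x \<in> carrier G - H. \<exists>y \<in> carrier G. x <# H \<subseteq> conj_class G y"
begin

lemma H_sub: "H \<subseteq> carrier G" using Hn normal_imp_subgroup subgroup.subset by blast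
lemma H_sg: "subgroup H G" using Hn normal_imp_subgroup by blast

lemma conj_closed:
  assumes B: "B \<in> P" and b: "b \<in> B" and g: "g \<in> carrier G"
  shows "g \<otimes> b \<otimes> inv g \<in> B"
proof -
  have bc: "b \<in> carrier G" using B b P_sub by blast
  have "usum B \<in> zg_center G" using cen usum_span[OF B] unfolding S_central_def by blast
  moreover have "usum {g} \<in> zg G" using g unfolding zg_def usum_def by auto
  ultimately have eq: "zg_mult G (usum B) (usum {g}) = zg_mult G (usum {g}) (usum B)"
    unfolding zg_center_def by blast
  define z where "z = g \<otimes> b"
  have zc: "z \<in> carrier G" using g bc z_def by simp
  have gbb: "inv g \<otimes> z = b" unfolding z_def using g bc by (simp add: m_assoc[symmetric])
  have "fib {g} B z = {g}"
    unfolding fib_def using gbb g b by auto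
  moreover have "int (card (fib B {g} z)) = int (card (fib {g} B z))"
    using eq mult_usum[OF zc, of B "{g}"] mult_usum[OF zc, of "{g}" B] by simp
  ultimately have "card (fib B {g} z) = 1" by simp
  hence "fib B {g} z \<noteq> {}" by (metis card.empty zero_neq_one)
  then obtain x where "x \<in> fib B {g} z" by blast
  hence x: "x \<in> carrier G" "x \<in> B" "inv x \<otimes> z = g" unfolding fib_def by simp_all
  hence "z = x \<otimes> g" using zc g by (metis inv_solve_left')
  hence "x = z \<otimes> inv g" using x g zc by (metis inv_solve_right)
  thus ?thesis using x z_def by simp
qed

lemma K1:
  assumes T: "T \<in> P" and t: "t \<in> T" "t \<notin> H" and h: "h \<in> H"
  shows "t \<otimes> h \<in> T"
proof -
  have tc: "t \<in> carrier G" using T t P_sub by blast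
  have hc: "h \<in> carrier G" using h H_sub by blast
  obtain y where y: "y \<in> carrier G" "t <# H \<subseteq> conj_class G y" using cam tc t by blast
  have "t \<otimes> h \<in> t <# H" unfolding l_coset_def using h by blast
  then obtain g where g: "g \<in> carrier G" "t \<otimes> h = inv g \<otimes> y \<otimes> g"
    using y unfolding conj_class_def by blast
  have "t \<otimes> \<one> \<in> t <# H" unfolding l_coset_def using subgroup.one_closed[OF H_sg] by blast
  then obtain k where k: "k \<in> carrier G" "t = inv k \<otimes> y \<otimes> k"
    using y tc unfolding conj_class_def by auto
  have "t = inv k \<otimes> (y \<otimes> k)" using k y by (simp add: m_assoc)
  hence "y \<otimes> k = k \<otimes> t" using k y tc by (simp add: inv_solve_left)
  hence yk: "y = k \<otimes> t \<otimes> inv k" using k y tc by (simp add: inv_solve_right)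
  define u where "u = inv g \<otimes> k"
  have uc: "u \<in> carrier G" using u_def g k by simp
  have iu: "inv u = inv k \<otimes> g" unfolding u_def using g(1) k(1) by (simp add: inv_mult_group[OF inv_closed[OF g(1)] k(1)])
  have "(inv g \<otimes> k) \<otimes> t \<otimes> (inv k \<otimes> g) = inv g \<otimes> y \<otimes> g"
    unfolding yk using g(1) k(1) tc by (simp add: m_assoc)
  hence "u \<otimes> t \<otimes> inv u = inv g \<otimes> y \<otimes> g" unfolding iu by (simp add: u_def)
  hence "t \<otimes> h = u \<otimes> t \<otimes> inv u" using g by simp
  thus ?thesis using conj_closed[OF T t(1) uc] by simp
qed

lemma K2:
  assumes T: "T \<in> P" and t: "t \<in> T" "t \<notin> H" and h: "h \<in> H"
  shows "h \<otimes> t \<in> T"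
proof -
  have tc: "t \<in> carrier G" using T t P_sub by blast
  have hc: "h \<in> carrier G" using h H_sub by blast
  have "inv t \<otimes> h \<otimes> t \<in> H" using normal.inv_op_closed1[OF Hn tc h] .
  hence "t \<otimes> (inv t \<otimes> h \<otimes> t) \<in> T" using K1[OF T t] by blast
  moreover have "t \<otimes> (inv t \<otimes> h \<otimes> t) = h \<otimes> t" using tc hc by (simp add: m_assoc[symmetric])
  ultimately show ?thesis by simp
qed

end



context ctx2
begin

lemma fib_fin: "finite (fib A C z)"
  unfolding fib_def using fin by simp

lemma fib_ne: "card (fib A C z) > 0 \<Longrightarrow> \<exists>x. x \<in> carrier G \<and> x \<in> A \<and> inv x \<otimes> z \<in> C"
proof -
  assume "card (fib A C z) > 0"
  hence "fib A C z \<noteq> {}" by auto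
  then obtain x where "x \<in> fib A C z" by auto
  thus ?thesis unfolding fib_def by auto
qed

lemma prim_use:
  assumes prim: "S_primitive G P" and sg: "subgroup W G" and Q: "Q \<subseteq> P" and W: "W = \<Union>Q"
  shows "W = {\<one>} \<or> W = carrier G"
proof -
  have "S_subgroup G P W" unfolding S_subgroup_def using sg Q W by auto
  thus ?thesis using prim unfolding S_primitive_def by simp
qed

lemma stepA:
  assumes prim: "S_primitive G P" and HG: "H \<noteq> carrier G"
    and T: "T \<in> P" and TH: "T \<subseteq> H"
  shows "T = {\<one>}"
proof -
  define Q where "Q = {B \<in> P. B \<subseteq> H}"
  define W where "W = \<Union>Q"
  have WH: "W \<subseteq> H" unfolding W_def Q_def by (rule Union_least) simp
  have inW: "\<exists>B. B \<in> P \<and> B \<subseteq> H \<and> a \<in> B" if "a \<in> W" for a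
  proof -
    from that obtain B where "B \<in> Q" "a \<in> B" unfolding W_def by (rule UnionE)
    thus ?thesis unfolding Q_def by auto
  qed
  have toW: "a \<in> W" if "B \<in> P" "B \<subseteq> H" "a \<in> B" for a B
  proof -
    have "B \<in> Q" unfolding Q_def using that by simp
    thus ?thesis unfolding W_def using that(3) by (rule UnionI)
  qed
  have sg: "subgroup W G"
  proof (rule subgroupI)
    show "W \<subseteq> carrier G" using WH H_sub by (rule order_trans)
    have "\<one> \<in> W" by (rule toW[OF P_one]) (simp_all add: subgroup.one_closed[OF H_sg])
    thus "W \<noteq> {}" by auto
  next
    fix a assume "a \<in> W"
    then obtain B where B: "B \<in> P" "B \<subseteq> H" "a \<in> B" using inW by auto
    have "(\<lambda>x. inv x) ` B \<subseteq> H"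
      by (rule image_subsetI) (use B(2) subgroup.m_inv_closed[OF H_sg] in auto)
    moreover have "inv a \<in> (\<lambda>x. inv x) ` B" using B(3) by (rule imageI)
    ultimately show "inv a \<in> W" by (rule toW[OF P_inv[OF B(1)]])
  next
    fix a b assume "a \<in> W" "b \<in> W"
    then obtain B1 B2 where B1: "B1 \<in> P" "B1 \<subseteq> H" "a \<in> B1" and B2: "B2 \<in> P" "B2 \<subseteq> H" "b \<in> B2"
      using inW by meson
    have ac: "a \<in> carrier G" using P_sub[OF B1(1)] B1(3) by (rule subsetD)
    have bc: "b \<in> carrier G" using P_sub[OF B2(1)] B2(3) by (rule subsetD)
    have abc: "a \<otimes> b \<in> carrier G" using ac bc by simp
    obtain B where B: "B \<in> P" "a \<otimes> b \<in> B" using P_cover[OF abc] by auto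
    have "a \<in> fib B1 B2 (a \<otimes> b)" unfolding fib_def using ac bc B1(3) B2(3) by (simp add: m_assoc[symmetric])
    hence pos: "card (fib B1 B2 (a \<otimes> b)) > 0" using fib_fin[of B1 B2 "a \<otimes> b"] card_gt_0_iff by auto
    have "B \<subseteq> H"
    proof
      fix w assume w: "w \<in> B"
      have wc: "w \<in> carrier G" using P_sub[OF B(1)] w by (rule subsetD)
      have "card (fib B1 B2 w) > 0" using fib_const[OF B1(1) B2(1) B(1) w B(2)] pos by simp
      hence "\<exists>x. x \<in> carrier G \<and> x \<in> B1 \<and> inv x \<otimes> w \<in> B2" by (rule fib_ne)
      then obtain x where x: "x \<in> carrier G" "x \<in> B1" "inv x \<otimes> w \<in> B2" by blast
      have "x \<in> H" using B1(2) x(2) by (rule subsetD)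
      moreover have "inv x \<otimes> w \<in> H" using B2(2) x(3) by (rule subsetD)
      ultimately have "x \<otimes> (inv x \<otimes> w) \<in> H" by (rule subgroup.m_closed[OF H_sg])
      moreover have "x \<otimes> (inv x \<otimes> w) = w" using x(1) wc by (simp add: m_assoc[symmetric])
      ultimately show "w \<in> H" by simp
    qed
    thus "a \<otimes> b \<in> W" by (rule toW[OF B(1) _ B(2)])
  qed
  have "Q \<subseteq> P" unfolding Q_def by auto
  hence "W = {\<one>} \<or> W = carrier G" using prim_use[OF prim sg _ W_def] by simp
  moreover have "W \<noteq> carrier G" using WH H_sub HG by auto
  ultimately have W1: "W = {\<one>}" by simp
  have "T \<subseteq> W" using toW[OF T TH] by auto
  thus ?thesis using P_ne[OF T] W1 by auto
qed


lemma fibR: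
  assumes T: "T \<in> P" and z: "z \<in> carrier G"
  shows "fib T ((\<lambda>x. inv x) ` T) z = {x \<in> T. inv z \<otimes> x \<in> T}"
proof (rule Set.set_eqI)
  fix x
  show "x \<in> fib T ((\<lambda>x. inv x) ` T) z \<longleftrightarrow> x \<in> {x \<in> T. inv z \<otimes> x \<in> T}"
  proof (cases "x \<in> T")
    case False thus ?thesis unfolding fib_def by simp
  next
    case True
    have xc: "x \<in> carrier G" using P_sub[OF T] True by (rule subsetD)
    have e: "inv (inv x \<otimes> z) = inv z \<otimes> x"
      using xc z by (simp add: inv_mult_group)
    have "inv x \<otimes> z \<in> (\<lambda>x. inv x) ` T \<longleftrightarrow> inv z \<otimes> x \<in> T"
    proof
      assume "inv x \<otimes> z \<in> (\<lambda>x. inv x) ` T"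
      then obtain t where t: "t \<in> T" "inv x \<otimes> z = inv t" by blast
      have tc: "t \<in> carrier G" using P_sub[OF T] t(1) by (rule subsetD)
      have "inv z \<otimes> x = t" using e t(2) tc by simp
      thus "inv z \<otimes> x \<in> T" using t(1) by simp
    next
      assume a: "inv z \<otimes> x \<in> T"
      have "inv (inv z \<otimes> x) = inv x \<otimes> z" using xc z by (simp add: inv_mult_group)
      hence "inv x \<otimes> z = (\<lambda>x. inv x) (inv z \<otimes> x)" by simp
      thus "inv x \<otimes> z \<in> (\<lambda>x. inv x) ` T" using a by (simp add: image_eqI)
    qed
    thus ?thesis unfolding fib_def using True xc by simp
  qed
qed

lemma stepB:
  assumes prim: "S_primitive G P" and H1: "H \<noteq> {\<one>}"
    and T: "T \<in> P" and TH: "T \<inter> H = {}"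
  shows False
proof -
  define R where "R = {z \<in> carrier G. \<forall>x\<in>T. inv z \<otimes> x \<in> T}"
  have Tc: "T \<subseteq> carrier G" using P_sub[OF T] .
  have Tf: "finite T" using Tc fin by (rule finite_subset)
  let ?T' = "(\<lambda>x. inv x) ` T"
  have T': "?T' \<in> P" using P_inv[OF T] .
  have Rcard: "z \<in> R \<longleftrightarrow> card (fib T ?T' z) = card T" if z: "z \<in> carrier G" for z
  proof
    assume "z \<in> R"
    hence "{x \<in> T. inv z \<otimes> x \<in> T} = T" unfolding R_def by auto
    thus "card (fib T ?T' z) = card T" using fibR[OF T z] by simp
  next
    assume "card (fib T ?T' z) = card T"
    hence "card {x \<in> T. inv z \<otimes> x \<in> T} = card T" using fibR[OF T z] by simp
    hence "{x \<in> T. inv z \<otimes> x \<in> T} = T" using Tf by (intro card_subset_eq) auto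
    thus "z \<in> R" unfolding R_def using z by auto
  qed
  have sg: "subgroup R G"
  proof (rule subgroupI)
    show "R \<subseteq> carrier G" unfolding R_def by auto
    have "\<one> \<in> R" unfolding R_def using Tc by auto
    thus "R \<noteq> {}" by auto
  next
    fix a assume a: "a \<in> R"
    have ac: "a \<in> carrier G" using a unfolding R_def by simp
    have im: "(\<lambda>x. inv a \<otimes> x) ` T \<subseteq> T" using a unfolding R_def by auto
    have "inj_on (\<lambda>x. inv a \<otimes> x) T"
    proof (rule inj_onI)
      fix x y assume "x \<in> T" "y \<in> T" "inv a \<otimes> x = inv a \<otimes> y"
      thus "x = y" using Tc ac by (meson inv_closed l_cancel subsetD)
    qed
    hence eqT: "(\<lambda>x. inv a \<otimes> x) ` T = T" using endo_inj_surj[OF Tf im] by simp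
    have "\<forall>x\<in>T. inv (inv a) \<otimes> x \<in> T"
    proof
      fix x assume "x \<in> T"
      hence "x \<in> (\<lambda>x. inv a \<otimes> x) ` T" using eqT by simp
      then obtain x' where x': "x' \<in> T" "x = inv a \<otimes> x'" by blast
      have x'c: "x' \<in> carrier G" using Tc x'(1) by (rule subsetD)
      have "inv (inv a) \<otimes> x = x'" unfolding x'(2) using ac x'c by (simp add: m_assoc[symmetric])
      thus "inv (inv a) \<otimes> x \<in> T" using x'(1) by simp
    qed
    thus "inv a \<in> R" unfolding R_def using ac by simp
  next
    fix a b assume "a \<in> R" "b \<in> R"
    hence ab: "a \<in> carrier G" "b \<in> carrier G" "\<forall>x\<in>T. inv a \<otimes> x \<in> T" "\<forall>x\<in>T. inv b \<otimes> x \<in> T"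
      unfolding R_def by simp_all
    have "\<forall>x\<in>T. inv (a \<otimes> b) \<otimes> x \<in> T"
    proof
      fix x assume x: "x \<in> T"
      have xc: "x \<in> carrier G" using Tc x by (rule subsetD)
      have "inv (a \<otimes> b) \<otimes> x = inv b \<otimes> (inv a \<otimes> x)"
        using ab(1,2) xc by (simp add: inv_mult_group m_assoc)
      thus "inv (a \<otimes> b) \<otimes> x \<in> T" using ab(3,4) x by simp
    qed
    thus "a \<otimes> b \<in> R" unfolding R_def using ab(1,2) by simp
  qed
  define Q where "Q = {B \<in> P. B \<subseteq> R}"
  have RQ: "R = \<Union>Q"
  proof
    show "\<Union>Q \<subseteq> R" unfolding Q_def by auto
    show "R \<subseteq> \<Union>Q"
    proof
      fix z assume z: "z \<in> R"
      have zc: "z \<in> carrier G" using z unfolding R_def by simp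
      obtain B where B: "B \<in> P" "z \<in> B" using P_cover[OF zc] by auto
      have "B \<subseteq> R"
      proof
        fix w assume w: "w \<in> B"
        have wc: "w \<in> carrier G" using P_sub[OF B(1)] w by (rule subsetD)
        have "card (fib T ?T' w) = card (fib T ?T' z)" using fib_const[OF T T' B(1) w B(2)] .
        also have "\<dots> = card T" using Rcard[OF zc] z by simp
        finally show "w \<in> R" using Rcard[OF wc] by simp
      qed
      hence "B \<in> Q" unfolding Q_def using B(1) by simp
      thus "z \<in> \<Union>Q" using B(2) by (rule UnionI)
    qed
  qed
  have "Q \<subseteq> P" unfolding Q_def by auto
  hence R01: "R = {\<one>} \<or> R = carrier G" using prim_use[OF prim sg _ RQ] by simp
  have HR: "H \<subseteq> R"
  proof
    fix h assume h: "h \<in> H"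
    have hc: "h \<in> carrier G" using H_sub h by (rule subsetD)
    have ih: "inv h \<in> H" using h by (rule subgroup.m_inv_closed[OF H_sg])
    have "\<forall>x\<in>T. inv h \<otimes> x \<in> T"
    proof
      fix x assume x: "x \<in> T"
      have "x \<notin> H" using x TH by auto
      thus "inv h \<otimes> x \<in> T" using K2[OF T x _ ih] by simp
    qed
    thus "h \<in> R" unfolding R_def using hc by simp
  qed
  have "\<exists>h\<in>H. h \<noteq> \<one>"
  proof (rule ccontr)
    assume "\<not> (\<exists>h\<in>H. h \<noteq> \<one>)"
    hence "H \<subseteq> {\<one>}" by auto
    moreover have "\<one> \<in> H" by (rule subgroup.one_closed[OF H_sg])
    ultimately show False using H1 by auto
  qed
  hence "R \<noteq> {\<one>}" using HR by auto
  hence Rall: "R = carrier G" using R01 by simp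
  obtain t where t: "t \<in> T" using P_ne[OF T] by auto
  have tc: "t \<in> carrier G" using Tc t by (rule subsetD)
  have "t \<in> R" using Rall tc by simp
  hence "\<forall>x\<in>T. inv t \<otimes> x \<in> T" unfolding R_def by simp
  hence "inv t \<otimes> t \<in> T" using t by blast
  hence "\<one> \<in> T" using tc by simp
  moreover have "\<one> \<in> H" by (rule subgroup.one_closed[OF H_sg])
  ultimately show False using TH by auto
qed

end



context ctx
begin

lemma stepC:
  assumes nt: "zspan P \<noteq> trivial_S_ring G" and g: "g \<in> carrier G" "g \<noteq> \<one>"
  shows "\<exists>T1 T2. T1 \<in> P \<and> T2 \<in> P \<and> T1 \<noteq> T2 \<and> T1 \<noteq> {\<one>} \<and> T2 \<noteq> {\<one>}"
proof (rule ccontr)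
  assume na: "\<not> ?thesis"
  obtain B0 where B0: "B0 \<in> P" "g \<in> B0" using P_cover[OF g(1)] by auto
  have B01: "B0 \<noteq> {\<one>}" using B0(2) g(2) by auto
  have PB: "B = {\<one>} \<or> B = B0" if "B \<in> P" for B
    using na that B0(1) B01 by blast
  have one_notin: "\<one> \<notin> B0"
  proof
    assume "\<one> \<in> B0"
    hence "B0 = {\<one>}" using P_same[OF B0(1) P_one] by simp
    thus False using B01 by simp
  qed
  have B0eq: "B0 = carrier G - {\<one>}"
  proof
    show "B0 \<subseteq> carrier G - {\<one>}" using P_sub[OF B0(1)] one_notin by auto
    show "carrier G - {\<one>} \<subseteq> B0"
    proof
      fix z assume z: "z \<in> carrier G - {\<one>}"
      obtain B where B: "B \<in> P" "z \<in> B" using P_cover z by auto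
      have "B \<noteq> {\<one>}" using z B(2) by auto
      hence "B = B0" using PB[OF B(1)] by simp
      thus "z \<in> B0" using B(2) by simp
    qed
  qed
  have Peq: "P = {{\<one>}, B0}" using PB P_one B0(1) by auto
  have sum2: "(\<Sum>B\<in>P. c B * usum B z) = c {\<one>} * usum {\<one>} z + c B0 * usum B0 z" for c z
    unfolding Peq using B01 by simp
  have uB0: "usum B0 z = usum (carrier G) z - usum {\<one>} z" for z
    unfolding B0eq usum_def by auto
  have "zspan P = trivial_S_ring G"
  proof
    show "zspan P \<subseteq> trivial_S_ring G"
    proof
      fix f assume "f \<in> zspan P"
      then obtain c where fc: "f = (\<lambda>z. \<Sum>B\<in>P. c B * usum B z)" unfolding zspan_def by auto
      have "f = (\<lambda>z. (c {\<one>} - c B0) * usum {\<one>} z + c B0 * usum (carrier G) z)"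
        unfolding fc sum2 uB0 by (simp add: algebra_simps)
      thus "f \<in> trivial_S_ring G" unfolding trivial_S_ring_def by blast
    qed
    show "trivial_S_ring G \<subseteq> zspan P"
    proof
      fix f assume "f \<in> trivial_S_ring G"
      then obtain a b where fab: "f = (\<lambda>z. a * usum {\<one>} z + b * usum (carrier G) z)"
        unfolding trivial_S_ring_def by auto
      define c where "c = (\<lambda>B. if B = {\<one>} then a + b else b)"
      have "f = (\<lambda>z. \<Sum>B\<in>P. c B * usum B z)"
        unfolding fab sum2 uB0 c_def using B01 by (simp add: algebra_simps)
      thus "f \<in> zspan P" unfolding zspan_def by blast
    qed
  qed
  thus False using nt by simp
qed

end




context ctx2
begin

lemma nontriv_facts:
  assumes prim: "S_primitive G P" and H1: "H \<noteq> {\<one>}" and HG: "H \<noteq> carrier G"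
    and T: "T \<in> P" and T1: "T \<noteq> {\<one>}"
  shows "\<exists>z\<in>T. z \<notin> H" and "T \<inter> H \<noteq> {}"
proof -
  show "\<exists>z\<in>T. z \<notin> H"
  proof (rule ccontr)
    assume "\<not> (\<exists>z\<in>T. z \<notin> H)"
    hence "T \<subseteq> H" by auto
    thus False using stepA[OF prim HG T] T1 by simp
  qed
  show "T \<inter> H \<noteq> {}" using stepB[OF prim H1 T] by auto
qed

lemma stepD:
  assumes prim: "S_primitive G P" and H1: "H \<noteq> {\<one>}" and HG: "H \<noteq> carrier G"
    and Ti: "Ti \<in> P" "Ti \<noteq> {\<one>}" and Tj: "Tj \<in> P" "Tj \<noteq> {\<one>}"
    and ninv: "Tj \<noteq> (\<lambda>x. inv x) ` Ti"
  shows False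
proof -
  have disj: "Tj \<inter> (\<lambda>x. inv x) ` Ti = {}" using P_disj[OF Tj(1) P_inv[OF Ti(1)] ninv] .
  have Hf: "finite H" using H_sub fin by (rule finite_subset)
  have Tic: "Ti \<subseteq> carrier G" using P_sub[OF Ti(1)] .
  have Tjc: "Tj \<subseteq> carrier G" using P_sub[OF Tj(1)] .
  define ai where "ai = card (Ti \<inter> H)"
  define aj where "aj = card (Tj \<inter> H)"
  have ai0: "ai > 0" unfolding ai_def using nontriv_facts(2)[OF prim H1 HG Ti] Hf by (simp add: card_gt_0_iff)
  have aj0: "aj > 0" unfolding aj_def using nontriv_facts(2)[OF prim H1 HG Tj] Hf by (simp add: card_gt_0_iff)
  let ?fb = "fib Ti Tj"
  have upper: "(\<Sum>h\<in>H. card (?fb h)) \<le> ai * aj"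
  proof -
    have "(\<Sum>h\<in>H. card (?fb h)) = card (SIGMA h:H. ?fb h)"
      using Hf fib_fin by simp
    also have "\<dots> \<le> card ((Ti \<inter> H) \<times> (Tj \<inter> H))"
    proof (rule card_inj_on_le)
      show "inj_on (\<lambda>(h, x). (x, inv x \<otimes> h)) (SIGMA h:H. ?fb h)"
      proof (rule inj_onI)
        fix p q assume p: "p \<in> (SIGMA h:H. ?fb h)" and q: "q \<in> (SIGMA h:H. ?fb h)"
          and e: "(\<lambda>(h, x). (x, inv x \<otimes> h)) p = (\<lambda>(h, x). (x, inv x \<otimes> h)) q"
        obtain h x where phx: "p = (h, x)" by (cases p)
        obtain h' x' where qhx: "q = (h', x')" by (cases q)
        have hx: "h \<in> H" "x \<in> carrier G" using p phx unfolding fib_def by auto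
        have hx': "h' \<in> H" using q qhx by auto
        have xx: "x' = x" and ee: "inv x \<otimes> h = inv x' \<otimes> h'" using e phx qhx by auto
        have "h = h'" using ee xx hx hx' H_sub by (metis inv_closed l_cancel subsetD)
        thus "p = q" using phx qhx xx by simp
      qed
      show "(\<lambda>(h, x). (x, inv x \<otimes> h)) ` (SIGMA h:H. ?fb h) \<subseteq> (Ti \<inter> H) \<times> (Tj \<inter> H)"
      proof
        fix p assume "p \<in> (\<lambda>(h, x). (x, inv x \<otimes> h)) ` (SIGMA h:H. ?fb h)"
        then obtain h x where h: "h \<in> H" and xf: "x \<in> ?fb h" and p: "p = (x, inv x \<otimes> h)" by auto
        have x: "x \<in> carrier G" "x \<in> Ti" "inv x \<otimes> h \<in> Tj" using xf unfolding fib_def by simp_all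
        have hc: "h \<in> carrier G" using H_sub h by (rule subsetD)
        have xH: "x \<in> H"
        proof (rule ccontr)
          assume xn: "x \<notin> H"
          define y where "y = inv x \<otimes> h"
          have yc: "y \<in> carrier G" unfolding y_def using x(1) hc by simp
          have yn: "y \<notin> H"
          proof
            assume yH: "y \<in> H"
            have "h \<otimes> inv y \<in> H" using h subgroup.m_inv_closed[OF H_sg yH] by (rule subgroup.m_closed[OF H_sg])
            moreover have "h \<otimes> inv y = x" unfolding y_def using x(1) hc
              by (simp add: inv_mult_group m_assoc[symmetric])
            ultimately show False using xn by simp
          qed
          have "y \<otimes> inv h \<in> Tj" using K1[OF Tj(1) _ yn subgroup.m_inv_closed[OF H_sg h]] x(3) y_def by simp
          moreover have "y \<otimes> inv h = inv x" unfolding y_def using x(1) hc by (simp add: m_assoc)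
          ultimately have "inv x \<in> Tj" by simp
          moreover have "inv x \<in> (\<lambda>x. inv x) ` Ti" using x(2) by (rule imageI)
          ultimately have "inv x \<in> Tj \<inter> (\<lambda>x. inv x) ` Ti" by (rule IntI)
          thus False using disj by (metis empty_iff)
        qed
        have "inv x \<otimes> h \<in> H" using subgroup.m_inv_closed[OF H_sg xH] h by (rule subgroup.m_closed[OF H_sg])
        thus "p \<in> (Ti \<inter> H) \<times> (Tj \<inter> H)" using p x xH by simp
      qed
      show "finite ((Ti \<inter> H) \<times> (Tj \<inter> H))" using Hf by simp
    qed
    also have "\<dots> = ai * aj" unfolding ai_def aj_def by (simp add: card_cartesian_product)
    finally show ?thesis .
  qed
  have lowU: "card (?fb z) \<ge> (if z \<in> Tj then ai else 0) + (if z \<in> Ti then aj else 0)"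
    if z: "z \<in> carrier G" "z \<notin> H" for z
  proof -
    define S1 where "S1 = (if z \<in> Tj then Ti \<inter> H else {})"
    define S2 where "S2 = (if z \<in> Ti then (\<lambda>y. z \<otimes> inv y) ` (Tj \<inter> H) else {})"
    have cS1: "card S1 = (if z \<in> Tj then ai else 0)" unfolding S1_def ai_def by simp
    have inj: "inj_on (\<lambda>y. z \<otimes> inv y) (Tj \<inter> H)"
    proof (rule inj_onI)
      fix y y' assume y: "y \<in> Tj \<inter> H" and y': "y' \<in> Tj \<inter> H" and e: "z \<otimes> inv y = z \<otimes> inv y'"
      have yc: "y \<in> carrier G" "y' \<in> carrier G" using y y' H_sub by auto
      have "inv y = inv y'" using e z(1) yc by (meson inv_closed l_cancel)
      thus "y = y'" using yc by (metis inv_inv)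
    qed
    have cS2: "card S2 = (if z \<in> Ti then aj else 0)" unfolding S2_def aj_def using card_image[OF inj] by simp
    have S1H: "S1 \<subseteq> H" unfolding S1_def by auto
    have S2H: "S2 \<inter> H = {}"
    proof -
      have "z \<otimes> inv y \<notin> H" if y: "y \<in> H" for y
      proof
        assume a: "z \<otimes> inv y \<in> H"
        have yc: "y \<in> carrier G" using H_sub y by (rule subsetD)
        have "(z \<otimes> inv y) \<otimes> y \<in> H" using a y by (rule subgroup.m_closed[OF H_sg])
        moreover have "(z \<otimes> inv y) \<otimes> y = z" using z(1) yc by (simp add: m_assoc)
        ultimately show False using z(2) by simp
      qed
      thus ?thesis unfolding S2_def by auto
    qed
    have sub: "S1 \<union> S2 \<subseteq> ?fb z"
    proof
      fix x assume "x \<in> S1 \<union> S2"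
      thus "x \<in> ?fb z"
      proof
        assume xS1: "x \<in> S1"
        hence zj: "z \<in> Tj" and x: "x \<in> Ti" "x \<in> H" unfolding S1_def by (auto split: if_splits)
        have xc: "x \<in> carrier G" using Tic x(1) by (rule subsetD)
        have hh: "inv z \<otimes> inv x \<otimes> z \<in> H"
          using normal.inv_op_closed1[OF Hn z(1) subgroup.m_inv_closed[OF H_sg x(2)]] .
        have "z \<otimes> (inv z \<otimes> inv x \<otimes> z) \<in> Tj" using K1[OF Tj(1) zj z(2) hh] .
        moreover have "z \<otimes> (inv z \<otimes> inv x \<otimes> z) = inv x \<otimes> z" using z(1) xc by (simp add: m_assoc[symmetric])
        ultimately show ?thesis unfolding fib_def using xc x(1) by simp
      next
        assume xS2: "x \<in> S2"
        hence zi: "z \<in> Ti" unfolding S2_def by (auto split: if_splits)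
        obtain y where y: "y \<in> Tj" "y \<in> H" and xy: "x = z \<otimes> inv y" using xS2 unfolding S2_def by (auto split: if_splits)
        have yc: "y \<in> carrier G" using H_sub y(2) by (rule subsetD)
        have xTi: "x \<in> Ti" unfolding xy using K1[OF Ti(1) zi z(2) subgroup.m_inv_closed[OF H_sg y(2)]] .
        have xc: "x \<in> carrier G" unfolding xy using z(1) yc by simp
        have "inv x \<otimes> z = y" unfolding xy using z(1) yc by (simp add: inv_mult_group m_assoc)
        thus ?thesis unfolding fib_def using xc xTi y(1) by simp
      qed
    qed
    have fS: "finite S1" "finite S2" unfolding S1_def S2_def using Hf by auto
    have dis: "S1 \<inter> S2 = {}" using S1H S2H by auto
    have "card S1 + card S2 = card (S1 \<union> S2)" using card_Un_disjoint[OF fS dis] by simp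
    also have "\<dots> \<le> card (?fb z)" using card_mono[OF fib_fin sub] .
    finally show ?thesis using cS1 cS2 by simp
  qed
  have lowH: "card (?fb h) \<ge> (if h \<in> Tj then ai else 0) + (if h \<in> Ti then aj else 0)"
    if h: "h \<in> H" for h
  proof -
    have hc: "h \<in> carrier G" using H_sub h by (rule subsetD)
    obtain B where B: "B \<in> P" "h \<in> B" using P_cover[OF hc] by auto
    show ?thesis
    proof (cases "B = {\<one>}")
      case True
      have "h = \<one>" using B(2) True by simp
      have "h \<notin> Ti"
      proof
        assume "h \<in> Ti" thus False using P_same[OF Ti(1) B(1) _ B(2)] True Ti(2) by simp
      qed
      moreover have "h \<notin> Tj"
      proof
        assume "h \<in> Tj" thus False using P_same[OF Tj(1) B(1) _ B(2)] True Tj(2) by simp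
      qed
      ultimately show ?thesis by simp
    next
      case False
      obtain z where z: "z \<in> B" "z \<notin> H" using nontriv_facts(1)[OF prim H1 HG B(1) False] by auto
      have zc: "z \<in> carrier G" using P_sub[OF B(1)] z(1) by (rule subsetD)
      have eqc: "card (?fb h) = card (?fb z)" using fib_const[OF Ti(1) Tj(1) B(1) B(2) z(1)] .
      have "z \<in> Tj \<longleftrightarrow> h \<in> Tj"
      proof
        assume "z \<in> Tj" hence "Tj = B" using P_same[OF Tj(1) B(1) _ z(1)] by simp
        thus "h \<in> Tj" using B(2) by simp
      next
        assume "h \<in> Tj" hence "Tj = B" using P_same[OF Tj(1) B(1) _ B(2)] by simp
        thus "z \<in> Tj" using z(1) by simp
      qed
      moreover have "z \<in> Ti \<longleftrightarrow> h \<in> Ti"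
      proof
        assume "z \<in> Ti" hence "Ti = B" using P_same[OF Ti(1) B(1) _ z(1)] by simp
        thus "h \<in> Ti" using B(2) by simp
      next
        assume "h \<in> Ti" hence "Ti = B" using P_same[OF Ti(1) B(1) _ B(2)] by simp
        thus "z \<in> Ti" using z(1) by simp
      qed
      ultimately show ?thesis using lowU[OF zc z(2)] eqc by simp
    qed
  qed
  have "(\<Sum>h\<in>H. (if h \<in> Tj then ai else 0) + (if h \<in> Ti then aj else 0)) \<le> (\<Sum>h\<in>H. card (?fb h))"
    using lowH by (rule sum_mono)
  moreover have "(\<Sum>h\<in>H. (if h \<in> Tj then ai else 0) + (if h \<in> Ti then aj else 0))
      = (\<Sum>h\<in>H \<inter> Tj. ai) + (\<Sum>h\<in>H \<inter> Ti. aj)"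
  proof -
    have a: "(\<Sum>h\<in>H. if h \<in> Tj then ai else 0) = (\<Sum>h\<in>H \<inter> Tj. ai)"
      using sum.inter_restrict[OF Hf, of "\<lambda>_. ai" Tj] by simp
    have b: "(\<Sum>h\<in>H. if h \<in> Ti then aj else 0) = (\<Sum>h\<in>H \<inter> Ti. aj)"
      using sum.inter_restrict[OF Hf, of "\<lambda>_. aj" Ti] by simp
    show ?thesis unfolding sum.distrib a b ..
  qed
  moreover have "(\<Sum>h\<in>H \<inter> Tj. ai) = aj * ai" unfolding aj_def by (simp add: Int_commute)
  moreover have "(\<Sum>h\<in>H \<inter> Ti. aj) = ai * aj" unfolding ai_def by (simp add: Int_commute)
  ultimately have "aj * ai + ai * aj \<le> ai * aj" using upper by linarith
  thus False using ai0 aj0 by simp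
qed

end



theorem theorem1p5:
  fixes G :: "('a, 'b) monoid_scheme"
  assumes "group G" and "finite (carrier G)" and "Camina_group G"
  shows "generalized_B_group G"
  unfolding generalized_B_group_def
proof (intro allI impI)
  fix P assume A: "S_ring_basis G P \<and> S_proper_central G P"
  have SB: "S_ring_basis G P" using A by simp
  have cen: "S_central G P" and nt: "zspan P \<noteq> trivial_S_ring G"
    using A unfolding S_proper_central_def by simp_all
  show "\<not> S_primitive G P"
  proof
    assume prim: "S_primitive G P"
    obtain H where Hn: "H \<lhd> G" and H1: "H \<noteq> {\<one>\<^bsub>G\<^esub>}" and HG: "H \<noteq> carrier G"
      and cam: "\<forall>x \<in> carrier G - H. \<exists>y \<in> carrier G. x <#\<^bsub>G\<^esub> H \<subseteq> conj_class G y"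
      using assms(3) unfolding Camina_group_def by blast
    have "ctx2 G P H"
      unfolding ctx2_def ctx_def ctx_axioms_def ctx2_axioms_def
      using assms(1,2) SB cen Hn cam by simp
    then interpret c: ctx2 G P H .
    have "\<exists>h\<in>H. h \<noteq> \<one>\<^bsub>G\<^esub>"
    proof (rule ccontr)
      assume "\<not> (\<exists>h\<in>H. h \<noteq> \<one>\<^bsub>G\<^esub>)"
      hence "H \<subseteq> {\<one>\<^bsub>G\<^esub>}" by auto
      moreover have "\<one>\<^bsub>G\<^esub> \<in> H" by (rule subgroup.one_closed[OF c.H_sg])
      ultimately show False using H1 by auto
    qed
    then obtain h where h: "h \<in> H" "h \<noteq> \<one>\<^bsub>G\<^esub>" by auto
    have hc: "h \<in> carrier G" using c.H_sub h(1) by (rule subsetD)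
    obtain T1 T2 where T: "T1 \<in> P" "T2 \<in> P" "T1 \<noteq> T2" "T1 \<noteq> {\<one>\<^bsub>G\<^esub>}" "T2 \<noteq> {\<one>\<^bsub>G\<^esub>}"
      using c.stepC[OF nt hc h(2)] by blast
    show False
    proof (cases "T2 = (\<lambda>x. inv\<^bsub>G\<^esub> x) ` T1")
      case True
      hence "T1 \<noteq> (\<lambda>x. inv\<^bsub>G\<^esub> x) ` T1" using T(3) by simp
      thus False using c.stepD[OF prim H1 HG T(1) T(4) T(1) T(4)] by simp
    next
      case False
      thus False using c.stepD[OF prim H1 HG T(1) T(4) T(2) T(5)] by simp
    qed
  qed
qed



end
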